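(* In the standing setting, define $g^v$ for $t\in\{1,\dots,\overline R\}$, $k\in\{0,\dots,m\}$, $\delta\in\{0,\dots,N\}$ by $g^v(t,k,\delta)=v(k)-kp_{t-1}$ if $k+\delta\le m$; $g^v(t,k,\delta)=\max_{0\le u\le k\wedge\sigma^v(t)}\sum_{\delta'}K_t(\delta'\mid\delta)\,g^v(t+1,u,\delta')$ if $t<\overline R$ and $k+\delta>m$; $g^v(t,k,\delta)=0$ if $t=\overline R$ and $k+\delta>m$; and $g^v(0,k)=\max_{0\le u\le k}\sum_{\delta'}\mathbb P(\delta(p_0)=\delta')\,g^v(1,u,\delta')$. Then $\varphi^v(0,k)=g^v(0,k)$ for all $k\in\{0,\dots,m\}$, and for all $t\in\{1,\dots,\overline R\}$, $k\in\{0,\dots,m\}$, $\delta\in\{0,\dots,N\}$, $$\varphi^v(t,k,\delta)\le g^v\big(t,k\wedge\sigma^v(t-1),\delta\big)\le\varphi^v\big(t,k\wedge\sigma^v(t-1),\delta\big).$$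
   Context: Standing setting. Integers $n\ge2$, $m\ge1$; $N:=(n-1)m$. Reals $p_{\mathrm{init}}\ge0$, $\Delta P>0$; the price at round $t\ge0$ is $p_t:=p_{\mathrm{init}}+t\Delta P$. The player's valuation $v:\{0,\dots,m\}\to[0,\infty)$ satisfies $v(0)=0$ and is non-decreasing and concave. $\overline R:=\lceil (v(1)-p_{\mathrm{init}})/\Delta P\rceil$, assumed $\ge1$. For $t\ge0$, $\sigma^v(t):=\min\operatorname{argmax}_{0\le u\le m}(v(u)-up_t)$. The opponent is given by random variables $Z_1\ge Z_2\ge\dots\ge Z_N\ge0$ (a.s.) on a probability space $(\Omega,\mathcal F,\mathbb P)$; its demand at price $p$ is $\delta(p):=\sum_{j=1}^N\mathbf 1\{Z_j>p\}$. For $t\ge1$ fix transition kernels $K_t(\delta'\mid\delta)$ ($\delta,\delta'\in\{0,\dots,N\}$), each $K_t(\cdot\mid\delta)$ a probability on $\{0,\dots,\delta\}$, with $K_t(\delta'\mid\delta)=\mathbb P(\delta(p_t)=\delta'\mid\delta(p_{t-1})=\delta)$ whenever $\mathbb P(\delta(p_{t-1})=\delta)>0$. Value function: for $t\in\{1,\dots,\overline R\}$, $k\in\{0,\dots,m\}$, $\delta\in\{0,\dots,N\}$: $\varphi^v(t,k,\delta):=v(k)-kp_{t-1}$ if $k+\delta\le m$; $:=\max_{0\le u\le k}\sum_{\delta'=0}^N K_t(\delta'\mid\delta)\varphi^v(t+1,u,\delta')$ if $k+\delta>m$ and $t<\overline R$; $:=0$ if $k+\delta>m$ and $t=\overline R$.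 Also $\varphi^v(0,k):=\max_{0\le u\le k}\sum_{\delta'}\mathbb P(\delta(p_0)=\delta')\varphi^v(1,u,\delta')$. $a\wedge b:=\min(a,b)$. *)

theory Defs
  imports "HOL-Probability.Probability"
begin

definition opp_demand :: "(nat \<Rightarrow> 'a \<Rightarrow> real) \<Rightarrow> nat \<Rightarrow> real \<Rightarrow> 'a \<Rightarrow> nat" where
  "opp_demand Z N q \<omega> = (\<Sum>j\<in>{1..N}. of_bool (Z j \<omega> > q))"

definition sigma_v :: "(nat \<Rightarrow> real) \<Rightarrow> (nat \<Rightarrow> real) \<Rightarrow> nat \<Rightarrow> nat \<Rightarrow> nat" where
  "sigma_v v p m t = Min {u \<in> {0..m}. \<forall>w \<in> {0..m}. v w - real w * p t \<le> v u - real u * p t}"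

text \<open>Value function phi^v(t,k,delta), t in 1..R. K t d' d stands for K_t(d' | d).\<close>
function phi_v :: "(nat \<Rightarrow> nat \<Rightarrow> nat \<Rightarrow> real) \<Rightarrow> (nat \<Rightarrow> real) \<Rightarrow> (nat \<Rightarrow> real)
    \<Rightarrow> nat \<Rightarrow> nat \<Rightarrow> nat \<Rightarrow> nat \<Rightarrow> nat \<Rightarrow> nat \<Rightarrow> real" where
  "phi_v K p v m N R t k d =
    (if k + d \<le> m then v k - real k * p (t - 1)
     else if t < R then Max ((\<lambda>u. \<Sum>d'\<in>{0..N}. K t d' d * phi_v K p v m N R (t + 1) u d') ` {0..k})
     else 0)"
  by pat_completeness auto
termination
  by (relation "Wellfounded.measure (\<lambda>(K, p, v, m, N, R, t, k, d). R - t)") auto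

text \<open>phi^v(0,k); q d' stands for P(delta(p_0) = d').\<close>
definition phi0_v :: "(nat \<Rightarrow> nat \<Rightarrow> nat \<Rightarrow> real) \<Rightarrow> (nat \<Rightarrow> real) \<Rightarrow> (nat \<Rightarrow> real) \<Rightarrow> (nat \<Rightarrow> real)
    \<Rightarrow> nat \<Rightarrow> nat \<Rightarrow> nat \<Rightarrow> nat \<Rightarrow> real" where
  "phi0_v K q p v m N R k = Max ((\<lambda>u. \<Sum>d'\<in>{0..N}. q d' * phi_v K p v m N R 1 u d') ` {0..k})"

function g_v :: "(nat \<Rightarrow> nat \<Rightarrow> nat \<Rightarrow> real) \<Rightarrow> (nat \<Rightarrow> real) \<Rightarrow> (nat \<Rightarrow> real)
    \<Rightarrow> nat \<Rightarrow> nat \<Rightarrow> nat \<Rightarrow> nat \<Rightarrow> nat \<Rightarrow> nat \<Rightarrow> real" where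
  "g_v K p v m N R t k d =
    (if k + d \<le> m then v k - real k * p (t - 1)
     else if t < R then Max ((\<lambda>u. \<Sum>d'\<in>{0..N}. K t d' d * g_v K p v m N R (t + 1) u d')
                              ` {0..min k (sigma_v v p m t)})
     else 0)"
  by pat_completeness auto
termination
  by (relation "Wellfounded.measure (\<lambda>(K, p, v, m, N, R, t, k, d). R - t)") auto

definition g0_v :: "(nat \<Rightarrow> nat \<Rightarrow> nat \<Rightarrow> real) \<Rightarrow> (nat \<Rightarrow> real) \<Rightarrow> (nat \<Rightarrow> real) \<Rightarrow> (nat \<Rightarrow> real)
    \<Rightarrow> nat \<Rightarrow> nat \<Rightarrow> nat \<Rightarrow> nat \<Rightarrow> real" where
  "g0_v K q p v m N R k = Max ((\<lambda>u. \<Sum>d'\<in>{0..N}. q d' * g_v K p v m N R 1 u d') ` {0..k})"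

end

theory Submission
  imports Defs
begin

lemma sigma_props:
  shows "sigma_v v p m t \<le> m"
    and "\<forall>w\<le>m. v w - real w * p t \<le> v (sigma_v v p m t) - real (sigma_v v p m t) * p t"
proof -
  define f where "f = (\<lambda>w. v w - real w * p t)"
  define S where "S = {u \<in> {0..m}. \<forall>w \<in> {0..m}. v w - real w * p t \<le> v u - real u * p t}"
  have "Max (f ` {0..m}) \<in> f ` {0..m}" by (intro Max_in) auto
  then obtain u where u: "u \<in> {0..m}" "Max (f ` {0..m}) = f u" by blast
  have "f w \<le> f u" if "w \<in> {0..m}" for w
    using u that by (metis Max_ge finite_atLeastAtMost finite_imageI image_eqI)
  then have "u \<in> S" unfolding S_def using u by (auto simp: f_def)
  then have "S \<noteq> {}" by auto
  moreover have "finite S" unfolding S_def by auto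
  ultimately have "Min S \<in> S" by (rule Min_in[rotated])
  then show "sigma_v v p m t \<le> m"
    and "\<forall>w\<le>m. v w - real w * p t \<le> v (sigma_v v p m t) - real (sigma_v v p m t) * p t"
    unfolding sigma_v_def S_def[symmetric] by (auto simp: S_def)
qed

lemma sigma_mono:
  assumes "p s < p t"
  shows "sigma_v v p m t \<le> sigma_v v p m s"
proof (rule ccontr)
  let ?a = "sigma_v v p m s" and ?b = "sigma_v v p m t"
  assume "\<not> ?b \<le> ?a"
  then have ab: "?a < ?b" by simp
  have h1: "v ?a - real ?a * p t \<le> v ?b - real ?b * p t"
    using sigma_props(2)[where v=v and p=p and m=m and t=t] sigma_props(1)[where v=v and p=p and m=m and t=s] by auto
  have h2: "v ?b - real ?b * p s \<le> v ?a - real ?a * p s"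
    using sigma_props(2)[where v=v and p=p and m=m and t=s] sigma_props(1)[where v=v and p=p and m=m and t=t] by auto
  have "(real ?b - real ?a) * (p t - p s) > 0" using ab assms by (simp add: mult_pos_pos)
  then show False using h1 h2 by (simp add: algebra_simps)
qed

lemma phi_bound:
  assumes Knn: "\<forall>t \<ge> 1. \<forall>d \<le> N. \<forall>d'. K t d' d \<ge> 0"
    and Ks: "\<forall>t \<ge> 1. \<forall>d \<le> N. (\<Sum>d'\<in>{0..N}. K t d' d) = 1"
    and pm: "\<forall>t. p t \<le> p (Suc t)"
    and v0: "v 0 = 0"
  shows "1 \<le> t \<Longrightarrow> k \<le> m \<Longrightarrow> d \<le> N \<Longrightarrow>
    phi_v K p v m N R t k d \<le> v (sigma_v v p m (t-1)) - real (sigma_v v p m (t-1)) * p (t-1)"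
proof (induction "R - t" arbitrary: t k d rule: less_induct)
  case less
  let ?Mx = "\<lambda>s. v (sigma_v v p m s) - real (sigma_v v p m s) * p s"
  have mx0: "0 \<le> ?Mx s" for s using sigma_props(2)[where v=v and p=p and m=m and t=s] v0 by force
  have mxm: "?Mx t \<le> ?Mx (t-1)"
  proof -
    have "p (t-1) \<le> p t" using pm less(2) by (metis Suc_diff_1 less_le_trans zero_less_one)
    then have "?Mx t \<le> v (sigma_v v p m t) - real (sigma_v v p m t) * p (t-1)"
      by (simp add: mult_left_mono)
    also have "\<dots> \<le> ?Mx (t-1)" using sigma_props[where v=v and p=p and m=m and t=t] sigma_props(2)[where v=v and p=p and m=m and t="t-1"] by blast
    finally show ?thesis .
  qed
  show ?case
  proof (cases "k + d \<le> m")
    case True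
    then show ?thesis using sigma_props(2)[where v=v and p=p and m=m and t="t-1"] less(3) by (subst phi_v.simps) auto
  next
    case False
    show ?thesis
    proof (cases "t < R")
      case tR: True
      have "Max ((\<lambda>u. \<Sum>d'\<in>{0..N}. K t d' d * phi_v K p v m N R (t + 1) u d') ` {0..k}) \<le> ?Mx (t-1)"
      proof (subst Max_le_iff, simp, simp, intro ballI)
        fix y assume "y \<in> (\<lambda>u. \<Sum>d'\<in>{0..N}. K t d' d * phi_v K p v m N R (t + 1) u d') ` {0..k}"
        then obtain u where u: "u \<le> k" "y = (\<Sum>d'\<in>{0..N}. K t d' d * phi_v K p v m N R (t + 1) u d')" by auto
        have "y \<le> (\<Sum>d'\<in>{0..N}. K t d' d * ?Mx t)"
          unfolding u(2)
        proof (rule sum_mono, rule mult_left_mono)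
          fix d' assume "d' \<in> {0..N}"
          then show "phi_v K p v m N R (t + 1) u d' \<le> ?Mx t"
            using less(1)[of "t+1" u d'] tR u less(3) by auto
          show "0 \<le> K t d' d" using Knn less by auto
        qed
        also have "\<dots> = ?Mx t" using Ks less by (simp add: sum_distrib_right[symmetric])
        finally show "y \<le> ?Mx (t-1)" using mxm by linarith
      qed
      then show ?thesis using False tR by (subst phi_v.simps) simp
    next
      case tR: False
      then show ?thesis using False mx0 by (subst phi_v.simps) simp
    qed
  qed
qed

lemma max_le_max:
  fixes f g :: "nat \<Rightarrow> real"
  assumes "\<forall>a\<in>A. \<exists>b\<in>B. f a \<le> g b" "finite A" "A \<noteq> {}" "finite B"
  shows "Max (f ` A) \<le> Max (g ` B)"
proof (subst Max_le_iff, use assms in simp, use assms in simp, intro ballI)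
  fix y assume "y \<in> f ` A"
  then obtain a where a: "a \<in> A" "y = f a" by auto
  then obtain b where "b \<in> B" "f a \<le> g b" using assms by auto
  then show "y \<le> Max (g ` B)" using a assms(4) by (meson Max_ge finite_imageI image_eqI order_trans)
qed

lemma g_le_phi:
  assumes Knn: "\<forall>t \<ge> 1. \<forall>d \<le> N. \<forall>d'. K t d' d \<ge> 0"
  shows "1 \<le> t \<Longrightarrow> d \<le> N \<Longrightarrow> g_v K p v m N R t k d \<le> phi_v K p v m N R t k d"
proof (induction "R - t" arbitrary: t k d rule: less_induct)
  case less
  show ?case
  proof (cases "k + d \<le> m")
    case True
    then show ?thesis by (subst phi_v.simps, subst g_v.simps) auto
  next
    case False
    show ?thesis
    proof (cases "t < R")
      case tR: True
      have "Max ((\<lambda>u. \<Sum>d'\<in>{0..N}. K t d' d * g_v K p v m N R (t + 1) u d') ` {0..min k (sigma_v v p m t)})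
         \<le> Max ((\<lambda>u. \<Sum>d'\<in>{0..N}. K t d' d * phi_v K p v m N R (t + 1) u d') ` {0..k})"
      proof (rule max_le_max, intro ballI bexI)
        fix u assume u: "u \<in> {0..min k (sigma_v v p m t)}"
        show "(\<Sum>d'\<in>{0..N}. K t d' d * g_v K p v m N R (t + 1) u d')
           \<le> (\<Sum>d'\<in>{0..N}. K t d' d * phi_v K p v m N R (t + 1) u d')"
        proof (rule sum_mono, rule mult_left_mono)
          fix d' assume "d' \<in> {0..N}"
          then show "g_v K p v m N R (t + 1) u d' \<le> phi_v K p v m N R (t + 1) u d'"
            using less(1)[of "t+1" d'] tR by auto
          show "0 \<le> K t d' d" using Knn less by auto
        qed
        show "u \<in> {0..k}" using u by auto
      qed auto
      then show ?thesis using False tR by (subst phi_v.simps, subst g_v.simps) simp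
    next
      case tR: False
      then show ?thesis using False by (subst phi_v.simps, subst g_v.simps) simp
    qed
  qed
qed

lemma phi_le_g:
  assumes Knn: "\<forall>t \<ge> 1. \<forall>d \<le> N. \<forall>d'. K t d' d \<ge> 0"
    and Ks: "\<forall>t \<ge> 1. \<forall>d \<le> N. (\<Sum>d'\<in>{0..N}. K t d' d) = 1"
    and pm: "\<forall>t. p t < p (Suc t)"
    and v0: "v 0 = 0"
  shows "1 \<le> t \<Longrightarrow> k \<le> m \<Longrightarrow> d \<le> N \<Longrightarrow>
    phi_v K p v m N R t k d \<le> g_v K p v m N R t (min k (sigma_v v p m (t-1))) d"
proof (induction "R - t" arbitrary: t k d rule: less_induct)
  case less
  let ?s = "sigma_v v p m (t-1)"
  let ?k = "min k ?s"
  have pm': "\<forall>t. p t \<le> p (Suc t)" using pm less_imp_le by blast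
  have ptt: "p (t-1) < p t" using pm less(2) by (metis Suc_diff_1 less_le_trans zero_less_one)
  have ss: "sigma_v v p m t \<le> ?s" by (rule sigma_mono[OF ptt])
  show ?case
  proof (cases "?k + d \<le> m")
    case True
    then have g: "g_v K p v m N R t ?k d = v ?k - real ?k * p (t-1)" by (subst g_v.simps) simp
    show ?thesis
    proof (cases "k \<le> ?s")
      case True
      then show ?thesis using g \<open>?k + d \<le> m\<close> by (subst phi_v.simps) simp
    next
      case False
      then have "?k = ?s" by simp
      then show ?thesis using g phi_bound[where K=K and N=N and p=p and v=v and t=t and k=k and d=d and m=m and R=R, OF Knn Ks pm' v0] less by simp
    qed
  next
    case F1: False
    then have F: "\<not> k + d \<le> m" by linarith
    show ?thesis
    proof (cases "t < R")
      case tR: True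
      have mk: "min ?k (sigma_v v p m t) = min k (sigma_v v p m t)" using ss by simp
      have "Max ((\<lambda>u. \<Sum>d'\<in>{0..N}. K t d' d * phi_v K p v m N R (t + 1) u d') ` {0..k})
         \<le> Max ((\<lambda>u. \<Sum>d'\<in>{0..N}. K t d' d * g_v K p v m N R (t + 1) u d') ` {0..min ?k (sigma_v v p m t)})"
      proof (rule max_le_max, intro ballI bexI)
        fix u assume u: "u \<in> {0..k}"
        show "(\<Sum>d'\<in>{0..N}. K t d' d * phi_v K p v m N R (t + 1) u d')
           \<le> (\<Sum>d'\<in>{0..N}. K t d' d * g_v K p v m N R (t + 1) (min u (sigma_v v p m t)) d')"
        proof (rule sum_mono, rule mult_left_mono)
          fix d' assume "d' \<in> {0..N}"
          then show "phi_v K p v m N R (t + 1) u d' \<le> g_v K p v m N R (t + 1) (min u (sigma_v v p m t)) d'"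
            using less(1)[of "t+1" u d'] tR u less(3) by auto
          show "0 \<le> K t d' d" using Knn less by auto
        qed
        show "min u (sigma_v v p m t) \<in> {0..min ?k (sigma_v v p m t)}" using u mk by auto
      qed auto
      then show ?thesis using F F1 tR by (subst phi_v.simps, subst g_v.simps) simp
    next
      case tR: False
      then show ?thesis using F F1 by (subst phi_v.simps, subst g_v.simps) simp
    qed
  qed
qed

theorem mainTheorem10:
  fixes n m N :: nat and p_init dP :: real and v :: "nat \<Rightarrow> real"
    and M :: "'a measure" and Z :: "nat \<Rightarrow> 'a \<Rightarrow> real"
    and K :: "nat \<Rightarrow> nat \<Rightarrow> nat \<Rightarrow> real"
    and p :: "nat \<Rightarrow> real" and R :: nat and q :: "nat \<Rightarrow> real"
  assumes n2: "n \<ge> 2" and m1: "m \<ge> 1" and N_def: "N = (n - 1) * m"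
    and pinit: "p_init \<ge> 0" and dP: "dP > 0"
    and p_def: "p = (\<lambda>t. p_init + real t * dP)"
    and v0: "v 0 = 0"
    and v_nonneg: "\<forall>i \<le> m. v i \<ge> 0"
    and v_mono: "\<forall>i j. i \<le> j \<and> j \<le> m \<longrightarrow> v i \<le> v j"
    and v_concave: "\<forall>i. 1 \<le> i \<and> i + 1 \<le> m \<longrightarrow> v (i + 1) - v i \<le> v i - v (i - 1)"
    and R_ge: "\<lceil>(v 1 - p_init) / dP\<rceil> \<ge> 1"
    and R_def: "R = nat \<lceil>(v 1 - p_init) / dP\<rceil>"
    and M_prob: "prob_space M"
    and Z_meas: "\<forall>j \<in> {1..N}. Z j \<in> borel_measurable M"
    and Z_ord: "AE \<omega> in M. (\<forall>j. 1 \<le> j \<and> j < N \<longrightarrow> Z (j + 1) \<omega> \<le> Z j \<omega>) \<and> Z N \<omega> \<ge> 0"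
    and K_nonneg: "\<forall>t \<ge> 1. \<forall>d \<le> N. \<forall>d'. K t d' d \<ge> 0"
    and K_supp: "\<forall>t \<ge> 1. \<forall>d \<le> N. \<forall>d'. d < d' \<longrightarrow> K t d' d = 0"
    and K_sum: "\<forall>t \<ge> 1. \<forall>d \<le> N. (\<Sum>d'\<in>{0..d}. K t d' d) = 1"
    and K_cond: "\<forall>t \<ge> 1. \<forall>d \<le> N. \<forall>d' \<le> N.
        measure M {\<omega> \<in> space M. opp_demand Z N (p (t - 1)) \<omega> = d} > 0 \<longrightarrow>
        K t d' d = measure M {\<omega> \<in> space M. opp_demand Z N (p t) \<omega> = d' \<and> opp_demand Z N (p (t - 1)) \<omega> = d}
                   / measure M {\<omega> \<in> space M. opp_demand Z N (p (t - 1)) \<omega> = d}"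
    and q_def: "q = (\<lambda>d'. measure M {\<omega> \<in> space M. opp_demand Z N (p 0) \<omega> = d'})"
  shows "(\<forall>k \<le> m. phi0_v K q p v m N R k = g0_v K q p v m N R k) \<and>
         (\<forall>t \<in> {1..R}. \<forall>k \<le> m. \<forall>d \<le> N.
            phi_v K p v m N R t k d \<le> g_v K p v m N R t (min k (sigma_v v p m (t - 1))) d \<and>
            g_v K p v m N R t (min k (sigma_v v p m (t - 1))) d
              \<le> phi_v K p v m N R t (min k (sigma_v v p m (t - 1))) d)"
proof -
  have Knn: "\<forall>t \<ge> 1. \<forall>d \<le> N. \<forall>d'. K t d' d \<ge> 0" using K_nonneg by blast
  have Ks: "\<forall>t \<ge> 1. \<forall>d \<le> N. (\<Sum>d'\<in>{0..N}. K t d' d) = 1"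
  proof (intro allI impI)
    fix t d :: nat assume t: "1 \<le> t" and d: "d \<le> N"
    have "(\<Sum>d'\<in>{0..N}. K t d' d) = (\<Sum>d'\<in>{0..d}. K t d' d)"
      by (rule sum.mono_neutral_right) (use K_supp t d in auto)
    then show "(\<Sum>d'\<in>{0..N}. K t d' d) = 1" using K_sum t d by simp
  qed
  have pm: "\<forall>t. p t < p (Suc t)" using dP p_def by simp
  have qnn: "\<And>d'. 0 \<le> q d'" using q_def by simp
  have A: "phi_v K p v m N R t k d \<le> g_v K p v m N R t (min k (sigma_v v p m (t - 1))) d"
    if "1 \<le> t" "k \<le> m" "d \<le> N" for t k d
    using phi_le_g[where K=K and N=N and p=p and v=v and m=m and R=R, OF Knn Ks pm v0] that by blast
  have B: "g_v K p v m N R t k d \<le> phi_v K p v m N R t k d" if "1 \<le> t" "d \<le> N" for t k d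
    using g_le_phi[where K=K and N=N and p=p and v=v and m=m and R=R, OF Knn] that by blast
  have P1: "phi0_v K q p v m N R k = g0_v K q p v m N R k" if "k \<le> m" for k
  proof (rule antisym)
    show "phi0_v K q p v m N R k \<le> g0_v K q p v m N R k"
      unfolding phi0_v_def g0_v_def
    proof (rule max_le_max, intro ballI bexI)
      fix u assume u: "u \<in> {0..k}"
      show "(\<Sum>d'\<in>{0..N}. q d' * phi_v K p v m N R 1 u d')
         \<le> (\<Sum>d'\<in>{0..N}. q d' * g_v K p v m N R 1 (min u (sigma_v v p m (1-1))) d')"
        by (rule sum_mono, rule mult_left_mono) (use A[of 1 u] u that qnn in \<open>simp_all del: phi_v.simps g_v.simps\<close>)
      show "min u (sigma_v v p m (1-1)) \<in> {0..k}" using u by auto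
    qed auto
    show "g0_v K q p v m N R k \<le> phi0_v K q p v m N R k"
      unfolding phi0_v_def g0_v_def
    proof (rule max_le_max, intro ballI bexI)
      fix u assume u: "u \<in> {0..k}"
      show "(\<Sum>d'\<in>{0..N}. q d' * g_v K p v m N R 1 u d')
         \<le> (\<Sum>d'\<in>{0..N}. q d' * phi_v K p v m N R 1 u d')"
        by (rule sum_mono, rule mult_left_mono) (use B[of 1] u that qnn in \<open>simp_all del: phi_v.simps g_v.simps\<close>)
      show "u \<in> {0..k}" using u by auto
    qed auto
  qed
  show ?thesis using P1 A B by auto
qed

end
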